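(* Suppose $|X|\ge3$. If a random choice rule $p$ on $X$ is consistent with the persistent craving model, then $p$ does not satisfy regularity, i.e. there exist $x\in A\subseteq B\subseteq X$ with $p(x,A)<p(x,B)$.
   Context: $X$ is a finite set, $\mathcal{X}$ its nonempty subsets, $\mathcal{L}(X)$ its linear orders, $M(\succ,A)$ the $\succ$-maximal element of $A$, $N(x,A)=\{\succ: x\succ y\ \forall y\in A\setminus\{x\}\}$. A random choice rule is $p:X\times\mathcal{X}\to[0,1]$ with $p(x,A)\ge0$ and $\sum_{x\in A}p(x,A)=1$. Given a linear order $\rhd$, the craving preferences $\{\succ_x\}_{x\in X}$ are defined by: $x\succ_x y$ for all $y\ne x$, and for $y,z\ne x$, $y\succ_x z$ iff $y\rhd z$. A distribution $\nu\in\Delta(\mathcal{L}(X))$ supported on $\{\succ_x\}_{x\in X}$ is craving monotonic w.r.t. $\rhd$ if $x\rhd y$ implies $\nu(\succ_x)>\nu(\succ_y)>0$. A persistence function is $\phi:X^2\to[0,1)$ with $\phi(x,x)=0$ and $\phi(x,y)>0$ for $x\ne y$. The transition function $t:X\times\mathcal{L}(X)\to\Delta(\mathcal{L}(X))$ has a persistent craving representation $(\rhd,\nu,\phi)$ if $t(x,\succ_y)=\phi(x,y)\delta_{\succ_y}+(1-\phi(x,y))\nu$ for all $x,y$, and $t(x,\succ)=\nu$ for every $\succ$ outside the support of $\nu$ ($\delta_{\succ}$ is the point mass). For each $A\in\mathcal{X}$, $\nu_A$ is the (unique) stationary distribution of the Markov chain on $\mathcal{L}(X)$ with transition probabilities $m_A(\succ,\succ')=t_{\succ'}(M(\succ,A),\succ)$.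 $p$ is consistent with the persistent craving model if there is such a $t$ (with some $\rhd$, craving monotonic $\nu$, persistence function $\phi$) with $p(x,A)=\sum_{\succ\in N(x,A)}\nu_A(\succ)$ for all $x\in A\in\mathcal{X}$. *)

theory Defs
  imports Complex_Main
begin

text \<open>Linear orders on X are represented as strict total orders (relations) on X.
  A pair (x,y) in r means x is strictly preferred to y.\<close>

definition linorders :: "'a set \<Rightarrow> 'a rel set" where
  "linorders X = {r. r \<subseteq> X \<times> X \<and> strict_linear_order_on X r}"

definition maxel :: "'a rel \<Rightarrow> 'a set \<Rightarrow> 'a" where
  "maxel r A = (THE x. x \<in> A \<and> (\<forall>y\<in>A - {x}. (x, y) \<in> r))"

definition Nset :: "'a set \<Rightarrow> 'a \<Rightarrow> 'a set \<Rightarrow> 'a rel set" where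
  "Nset X x A = {r \<in> linorders X. \<forall>y\<in>A - {x}. (x, y) \<in> r}"

definition random_choice_rule :: "'a set \<Rightarrow> ('a \<Rightarrow> 'a set \<Rightarrow> real) \<Rightarrow> bool" where
  "random_choice_rule X p \<longleftrightarrow>
     (\<forall>A. A \<subseteq> X \<and> A \<noteq> {} \<longrightarrow>
        (\<forall>x\<in>X. 0 \<le> p x A \<and> p x A \<le> 1) \<and> (\<Sum>x\<in>A. p x A) = 1)"

definition craving :: "'a set \<Rightarrow> 'a rel \<Rightarrow> 'a \<Rightarrow> 'a rel" where
  "craving X rh x = {(y, z). y \<in> X \<and> z \<in> X \<and> y \<noteq> z \<and>
                         (y = x \<or> (z \<noteq> x \<and> (y, z) \<in> rh))}"

definition distr_on :: "'a set \<Rightarrow> ('a rel \<Rightarrow> real) \<Rightarrow> bool" where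
  "distr_on X \<mu> \<longleftrightarrow> (\<forall>r\<in>linorders X. 0 \<le> \<mu> r) \<and> (\<Sum>r\<in>linorders X. \<mu> r) = 1"

definition craving_monotonic :: "'a set \<Rightarrow> 'a rel \<Rightarrow> ('a rel \<Rightarrow> real) \<Rightarrow> bool" where
  "craving_monotonic X rh \<nu> \<longleftrightarrow>
     distr_on X \<nu> \<and>
     (\<forall>r\<in>linorders X. r \<notin> craving X rh ` X \<longrightarrow> \<nu> r = 0) \<and>
     (\<forall>x\<in>X. \<forall>y\<in>X. (x, y) \<in> rh \<longrightarrow>
        \<nu> (craving X rh x) > \<nu> (craving X rh y) \<and> \<nu> (craving X rh y) > 0)"

definition persistence :: "'a set \<Rightarrow> ('a \<Rightarrow> 'a \<Rightarrow> real) \<Rightarrow> bool" where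
  "persistence X \<phi> \<longleftrightarrow>
     (\<forall>x\<in>X. \<forall>y\<in>X. 0 \<le> \<phi> x y \<and> \<phi> x y < 1) \<and>
     (\<forall>x\<in>X. \<phi> x x = 0) \<and>
     (\<forall>x\<in>X. \<forall>y\<in>X. x \<noteq> y \<longrightarrow> 0 < \<phi> x y)"

text \<open>t x r r' is the probability of moving to r' given choice x under preference r.\<close>
definition persistent_craving_rep ::
  "'a set \<Rightarrow> ('a \<Rightarrow> 'a rel \<Rightarrow> 'a rel \<Rightarrow> real) \<Rightarrow> 'a rel \<Rightarrow> ('a rel \<Rightarrow> real)
     \<Rightarrow> ('a \<Rightarrow> 'a \<Rightarrow> real) \<Rightarrow> bool" where
  "persistent_craving_rep X t rh \<nu> \<phi> \<longleftrightarrow>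
     rh \<in> linorders X \<and> craving_monotonic X rh \<nu> \<and> persistence X \<phi> \<and>
     (\<forall>x\<in>X. \<forall>y\<in>X. \<forall>r'\<in>linorders X.
        t x (craving X rh y) r' =
          \<phi> x y * (if r' = craving X rh y then 1 else 0) + (1 - \<phi> x y) * \<nu> r') \<and>
     (\<forall>x\<in>X. \<forall>r\<in>linorders X. \<nu> r = 0 \<longrightarrow> (\<forall>r'\<in>linorders X. t x r r' = \<nu> r'))"

definition stationary :: "'a set \<Rightarrow> ('a \<Rightarrow> 'a rel \<Rightarrow> 'a rel \<Rightarrow> real) \<Rightarrow> 'a set
     \<Rightarrow> ('a rel \<Rightarrow> real) \<Rightarrow> bool" where
  "stationary X t A \<mu> \<longleftrightarrow> distr_on X \<mu> \<and>
     (\<forall>r'\<in>linorders X. \<mu> r' = (\<Sum>r\<in>linorders X. \<mu> r * t (maxel r A) r r'))"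

definition stat_distr :: "'a set \<Rightarrow> ('a \<Rightarrow> 'a rel \<Rightarrow> 'a rel \<Rightarrow> real) \<Rightarrow> 'a set
     \<Rightarrow> ('a rel \<Rightarrow> real)" where
  "stat_distr X t A = (THE \<mu>. stationary X t A \<mu> \<and> (\<forall>r. r \<notin> linorders X \<longrightarrow> \<mu> r = 0))"

definition consistent_persistent_craving ::
  "'a set \<Rightarrow> ('a \<Rightarrow> 'a set \<Rightarrow> real) \<Rightarrow> bool" where
  "consistent_persistent_craving X p \<longleftrightarrow>
     (\<exists>t rh \<nu> \<phi>. persistent_craving_rep X t rh \<nu> \<phi> \<and>
        (\<forall>A. A \<subseteq> X \<and> A \<noteq> {} \<longrightarrow>
           (\<forall>x\<in>A. p x A = (\<Sum>r\<in>Nset X x A. stat_distr X t A r))))"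

end

theory Submission imports Defs begin

lemma lin_props:
  assumes "r \<in> linorders X"
  shows "trans r" "irrefl r" "total_on X r" "r \<subseteq> X \<times> X"
  using assms by (auto simp: linorders_def strict_linear_order_on_def)

lemma craving_lin:
  assumes "rh \<in> linorders X" "y \<in> X"
  shows "craving X rh y \<in> linorders X"
proof -
  have tr: "trans rh" and ir: "irrefl rh" and to: "total_on X rh"
    using lin_props[OF assms(1)] by auto
  have "trans (craving X rh y)"
    unfolding trans_def craving_def using tr ir
    by (auto simp: trans_def irrefl_def)
  moreover have "irrefl (craving X rh y)" unfolding irrefl_def craving_def by auto
  moreover have "total_on X (craving X rh y)"
    using to unfolding total_on_def craving_def by auto
  ultimately show ?thesis
    unfolding linorders_def strict_linear_order_on_def craving_def by auto
qed

lemma craving_top: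
  "y \<in> X \<Longrightarrow> z \<in> X \<Longrightarrow> z \<noteq> y \<Longrightarrow> (y, z) \<in> craving X rh y"
  unfolding craving_def by auto

lemma craving_inj: "inj_on (craving X rh) X"
proof (rule inj_onI)
  fix u v assume "u \<in> X" "v \<in> X" "craving X rh u = craving X rh v"
  then show "u = v" unfolding craving_def by (auto simp: set_eq_iff) 
qed

lemma maxel_eq:
  assumes "trans r" "irrefl r" "x \<in> A" "\<forall>y\<in>A - {x}. (x, y) \<in> r"
  shows "maxel r A = x"
  unfolding maxel_def
proof (rule the_equality)
  show "x \<in> A \<and> (\<forall>y\<in>A - {x}. (x, y) \<in> r)" using assms by auto
next
  fix x' assume h: "x' \<in> A \<and> (\<forall>y\<in>A - {x'}. (x', y) \<in> r)"
  show "x' = x"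
  proof (rule ccontr)
    assume "x' \<noteq> x"
    then have "(x, x') \<in> r" "(x', x) \<in> r" using h assms by auto
    then show False using assms(1,2) by (meson irrefl_def transD)
  qed
qed

lemma stat_unique:
  fixes L :: "'b set" and \<nu> g :: "'b \<Rightarrow> real" and T :: "'b \<Rightarrow> 'b \<Rightarrow> real"
  assumes fin: "finite L" and nn: "\<forall>r\<in>L. 0 \<le> \<nu> r" and s1: "sum \<nu> L = 1"
    and gb: "\<forall>r\<in>L. 0 \<le> g r \<and> g r < 1"
    and T: "\<forall>r\<in>L. \<forall>r'\<in>L. T r r' = g r * (if r' = r then 1 else 0) + (1 - g r) * \<nu> r'"
  shows "(THE \<mu>. (((\<forall>r\<in>L. 0 \<le> \<mu> r) \<and> sum \<mu> L = 1) \<and>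
            (\<forall>r'\<in>L. \<mu> r' = (\<Sum>r\<in>L. \<mu> r * T r r'))) \<and> (\<forall>r. r \<notin> L \<longrightarrow> \<mu> r = 0))
        = (\<lambda>r. if r \<in> L then \<nu> r / (1 - g r) / (\<Sum>q\<in>L. \<nu> q / (1 - g q)) else 0)"
proof -
  define S where "S = (\<Sum>q\<in>L. \<nu> q / (1 - g q))"
  have le: "\<nu> r \<le> \<nu> r / (1 - g r)" if "r \<in> L" for r
  proof -
    have "0 < 1 - g r" "1 - g r \<le> 1" using gb that by auto
    then show ?thesis using nn that by (simp add: le_divide_eq mult_left_le)
  qed
  have "sum \<nu> L \<le> S" unfolding S_def by (rule sum_mono) (use le in auto)
  then have "1 \<le> S" using s1 by simp
  then have Spos: "S > 0" by simp
  have comp: "(\<Sum>r\<in>L. \<mu> r * T r r') = g r' * \<mu> r' + \<nu> r' * (\<Sum>r\<in>L. \<mu> r * (1 - g r))"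
    if "r' \<in> L" for \<mu> r'
  proof -
    have "(\<Sum>r\<in>L. \<mu> r * T r r') = (\<Sum>r\<in>L. (if r = r' then \<mu> r * g r else 0) + \<nu> r' * (\<mu> r * (1 - g r)))"
    proof (rule sum.cong)
      fix r assume "r \<in> L"
      then have e: "T r r' = g r * (if r' = r then 1 else 0) + (1 - g r) * \<nu> r'" using T that by blast
      show "\<mu> r * T r r' = (if r = r' then \<mu> r * g r else 0) + \<nu> r' * (\<mu> r * (1 - g r))"
        unfolding e by (cases "r = r'") (simp_all add: algebra_simps)
    qed simp
    also have "\<dots> = g r' * \<mu> r' + \<nu> r' * (\<Sum>r\<in>L. \<mu> r * (1 - g r))"
      using that fin by (simp add: sum.distrib sum_distrib_left)
    finally show ?thesis .
  qed
  define \<mu>0 where "\<mu>0 = (\<lambda>r. if r \<in> L then \<nu> r / (1 - g r) / S else 0)"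
  let ?P = "\<lambda>\<mu>. (((\<forall>r\<in>L. 0 \<le> \<mu> r) \<and> sum \<mu> L = 1) \<and>
            (\<forall>r'\<in>L. \<mu> r' = (\<Sum>r\<in>L. \<mu> r * T r r'))) \<and> (\<forall>r. r \<notin> L \<longrightarrow> \<mu> r = 0)"
  have "?P \<mu>0"
  proof (intro conjI ballI allI impI)
    fix r assume r: "r \<in> L"
    then have "0 \<le> \<nu> r" "0 < 1 - g r" using nn gb by auto
    then show "0 \<le> \<mu>0 r" using r Spos unfolding \<mu>0_def by simp
  next
    have "sum \<mu>0 L = (\<Sum>r\<in>L. \<nu> r / (1 - g r)) / S"
      unfolding \<mu>0_def by (simp add: sum_divide_distrib)
    then show "sum \<mu>0 L = 1" using Spos unfolding S_def by simp
  next
    fix r' assume r': "r' \<in> L"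
    have "(\<Sum>r\<in>L. \<mu>0 r * (1 - g r)) = (\<Sum>r\<in>L. \<nu> r / S)"
      by (rule sum.cong) (use gb in \<open>auto simp: \<mu>0_def\<close>)
    also have "\<dots> = 1 / S" using s1 by (simp add: sum_divide_distrib[symmetric])
    finally have K: "(\<Sum>r\<in>L. \<mu>0 r * (1 - g r)) = 1 / S" .
    have "1 - g r' > 0" using gb r' by auto
    then show "\<mu>0 r' = (\<Sum>r\<in>L. \<mu>0 r * T r r')"
      unfolding comp[OF r'] K using r' Spos by (simp add: \<mu>0_def field_simps)
  next
    fix r assume "r \<notin> L" then show "\<mu>0 r = 0" unfolding \<mu>0_def by simp
  qed
  moreover have "\<mu> = \<mu>0" if P: "?P \<mu>" for \<mu>
  proof
    fix r'
    define K where "K = (\<Sum>r\<in>L. \<mu> r * (1 - g r))"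
    have eq: "\<mu> q = \<nu> q * K / (1 - g q)" if q: "q \<in> L" for q
    proof -
      have "\<mu> q = g q * \<mu> q + \<nu> q * K" using P comp[OF q, of \<mu>] q unfolding K_def by auto
      moreover have "1 - g q > 0" using gb q by auto
      ultimately show ?thesis by (simp add: field_simps)
    qed
    have "sum \<mu> L = (\<Sum>q\<in>L. \<nu> q * K / (1 - g q))" by (rule sum.cong) (simp_all add: eq)
    moreover have "sum \<mu> L = 1" using P by blast
    ultimately have "1 = (\<Sum>q\<in>L. \<nu> q * K / (1 - g q))" by simp
    also have "\<dots> = K * S" unfolding S_def by (simp add: sum_distrib_left mult.commute)
    finally have "K = 1 / S" using Spos by (simp add: field_simps)
    show "\<mu> r' = \<mu>0 r'"
    proof (cases "r' \<in> L")
      case True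
      then show ?thesis using eq[OF True] \<open>K = 1 / S\<close> unfolding \<mu>0_def by simp
    next
      case False
      then show ?thesis using P unfolding \<mu>0_def by simp
    qed
  qed
  ultimately have "(THE \<mu>. ?P \<mu>) = \<mu>0" by (rule the_equality)
  then show ?thesis unfolding \<mu>0_def S_def .
qed

lemma ex_max:
  assumes "trans r" "total_on X r" "finite A" "A \<noteq> {}" "A \<subseteq> X"
  shows "\<exists>x\<in>A. \<forall>y\<in>A - {x}. (x, y) \<in> r"
  using assms(3-5)
proof (induction A rule: finite_ne_induct)
  case (singleton x) then show ?case by auto
next
  case (insert z F)
  then obtain m where m: "m \<in> F" "\<forall>y\<in>F - {m}. (m, y) \<in> r" by auto
  have "z \<noteq> m" using insert m by auto
  moreover have "z \<in> X" "m \<in> X" using insert m by auto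
  ultimately have "(z, m) \<in> r \<or> (m, z) \<in> r" using assms(2) unfolding total_on_def by blast
  then show ?case
  proof
    assume zm: "(z, m) \<in> r"
    have "\<forall>y\<in>insert z F - {z}. (z, y) \<in> r"
    proof
      fix y assume "y \<in> insert z F - {z}"
      then have "y = m \<or> (y \<in> F - {m})" by auto
      then show "(z, y) \<in> r" using zm m assms(1) by (meson transD)
    qed
    then show ?thesis by blast
  next
    assume "(m, z) \<in> r"
    then have "\<forall>y\<in>insert z F - {m}. (m, y) \<in> r" using m by auto
    then show ?thesis using m by blast
  qed
qed

lemma maxel_in:
  assumes "trans r" "irrefl r" "total_on X r" "finite A" "A \<noteq> {}" "A \<subseteq> X"
  shows "maxel r A \<in> A"
proof -
  obtain x where "x \<in> A" "\<forall>y\<in>A - {x}. (x, y) \<in> r" using ex_max[OF assms(1,3-6)] by blast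
  then show ?thesis using maxel_eq[OF assms(1,2)] by simp
qed

lemma three_elems:
  assumes "finite X" "card X \<ge> 3"
  shows "\<exists>x\<in>X. \<exists>y\<in>X. \<exists>z\<in>X. x \<noteq> y \<and> x \<noteq> z \<and> y \<noteq> z"
proof -
  obtain T where "T \<subseteq> X" "card T = 3" "finite T" using obtain_subset_with_card_n[OF assms(2)] by metis
  then show ?thesis by (auto simp: card_3_iff)
qed

theorem proposition1:
  fixes X :: "'a set" and p :: "'a \<Rightarrow> 'a set \<Rightarrow> real"
  assumes "finite X" and "card X \<ge> 3"
    and "random_choice_rule X p"
    and "consistent_persistent_craving X p"
  shows "\<exists>x A B. x \<in> A \<and> A \<subseteq> B \<and> B \<subseteq> X \<and> p x A < p x B"
proof -
  from assms(4) have "\<exists>t rh \<nu> \<phi>. persistent_craving_rep X t rh \<nu> \<phi> \<and>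
        (\<forall>A. A \<subseteq> X \<and> A \<noteq> {} \<longrightarrow>
           (\<forall>x\<in>A. p x A = (\<Sum>r\<in>Nset X x A. stat_distr X t A r)))"
    unfolding consistent_persistent_craving_def .
  then obtain t rh \<nu> \<phi> where rc: "persistent_craving_rep X t rh \<nu> \<phi> \<and>
        (\<forall>A. A \<subseteq> X \<and> A \<noteq> {} \<longrightarrow>
           (\<forall>x\<in>A. p x A = (\<Sum>r\<in>Nset X x A. stat_distr X t A r)))"
    by (elim exE) (rule that)
  have rep: "persistent_craving_rep X t rh \<nu> \<phi>" using rc by (rule conjunct1)
  have cons: "\<forall>A. A \<subseteq> X \<and> A \<noteq> {} \<longrightarrow>
           (\<forall>x\<in>A. p x A = (\<Sum>r\<in>Nset X x A. stat_distr X t A r))" using rc by (rule conjunct2)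
  define L where "L = linorders X"
  define C where "C = craving X rh ` X"
  have rhL: "rh \<in> L" and mono: "craving_monotonic X rh \<nu>" and pers: "persistence X \<phi>"
    and tform: "\<forall>x\<in>X. \<forall>y\<in>X. \<forall>r'\<in>L.
        t x (craving X rh y) r' =
          \<phi> x y * (if r' = craving X rh y then 1 else 0) + (1 - \<phi> x y) * \<nu> r'"
    and tnull: "\<forall>x\<in>X. \<forall>r\<in>L. \<nu> r = 0 \<longrightarrow> (\<forall>r'\<in>L. t x r r' = \<nu> r')"
    using rep unfolding persistent_craving_rep_def L_def by auto
  have tr: "trans rh" and ir: "irrefl rh" and to: "total_on X rh"
    using lin_props[OF rhL[unfolded L_def]] by auto
  have finL: "finite L"
  proof -
    have "L \<subseteq> Pow (X \<times> X)" unfolding L_def linorders_def by auto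
    then show ?thesis using assms(1) finite_subset by blast
  qed
  have nn: "\<forall>r\<in>L. 0 \<le> \<nu> r" and s1: "sum \<nu> L = 1"
    using mono unfolding craving_monotonic_def distr_on_def L_def by auto
  have supp: "\<And>r. r \<in> L \<Longrightarrow> r \<notin> C \<Longrightarrow> \<nu> r = 0"
    using mono unfolding craving_monotonic_def L_def C_def by auto
  have monoD: "\<And>x y. x \<in> X \<Longrightarrow> y \<in> X \<Longrightarrow> (x, y) \<in> rh \<Longrightarrow>
      \<nu> (craving X rh x) > \<nu> (craving X rh y) \<and> \<nu> (craving X rh y) > 0"
    using mono unfolding craving_monotonic_def by auto
  have phiB: "\<And>x y. x \<in> X \<Longrightarrow> y \<in> X \<Longrightarrow> 0 \<le> \<phi> x y \<and> \<phi> x y < 1"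
    and phi0: "\<And>x. x \<in> X \<Longrightarrow> \<phi> x x = 0"
    and phiP: "\<And>x y. x \<in> X \<Longrightarrow> y \<in> X \<Longrightarrow> x \<noteq> y \<Longrightarrow> 0 < \<phi> x y"
    using pers unfolding persistence_def by auto
  have cravL: "craving X rh y \<in> L" if "y \<in> X" for y
    unfolding L_def by (rule craving_lin[OF rhL[unfolded L_def] that])
  have invc: "inv_into X (craving X rh) (craving X rh y) = y" if "y \<in> X" for y
    by (rule inv_into_f_f[OF craving_inj that])
  have maxelL: "\<And>r A. r \<in> L \<Longrightarrow> A \<subseteq> X \<Longrightarrow> A \<noteq> {} \<Longrightarrow> maxel r A \<in> A"
  proof -
    fix r A assume "r \<in> L" "A \<subseteq> X" "A \<noteq> {}"
    moreover have "finite A" using \<open>A \<subseteq> X\<close> assms(1) finite_subset by blast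
    ultimately show "maxel r A \<in> A"
      using maxel_in[OF lin_props(1-3)[OF \<open>r \<in> L\<close>[unfolded L_def]]] by blast
  qed
  define gg where "gg A r = (if r \<in> C then \<phi> (maxel r A) (inv_into X (craving X rh) r) else 0)" for A r
  define S where "S A = (\<Sum>q\<in>L. \<nu> q / (1 - gg A q))" for A
  have gb: "\<forall>r\<in>L. 0 \<le> gg A r \<and> gg A r < 1" if A: "A \<subseteq> X" "A \<noteq> {}" for A
  proof
    fix r assume r: "r \<in> L"
    show "0 \<le> gg A r \<and> gg A r < 1"
    proof (cases "r \<in> C")
      case True
      then obtain y where y: "y \<in> X" "r = craving X rh y" unfolding C_def by auto
      have "maxel r A \<in> X" using maxelL[OF r A] A by auto
      then show ?thesis using True y phiB invc unfolding gg_def by auto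
    qed (simp add: gg_def)
  qed
  have SD: "stat_distr X t A = (\<lambda>r. if r \<in> L then \<nu> r / (1 - gg A r) / S A else 0)"
    if A: "A \<subseteq> X" "A \<noteq> {}" for A
  proof -
    have T: "\<forall>r\<in>L. \<forall>r'\<in>L. t (maxel r A) r r' = gg A r * (if r' = r then 1 else 0) + (1 - gg A r) * \<nu> r'"
    proof (intro ballI)
      fix r r' assume r: "r \<in> L" and r': "r' \<in> L"
      have mX: "maxel r A \<in> X" using maxelL[OF r A] A by auto
      show "t (maxel r A) r r' = gg A r * (if r' = r then 1 else 0) + (1 - gg A r) * \<nu> r'"
      proof (cases "r \<in> C")
        case True
        then obtain y where y: "y \<in> X" "r = craving X rh y" unfolding C_def by auto
        then show ?thesis using tform mX r' True invc unfolding gg_def by auto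
      next
        case False
        then show ?thesis using tnull mX r r' supp unfolding gg_def by auto
      qed
    qed
    show ?thesis
      unfolding stat_distr_def stationary_def distr_on_def S_def L_def[symmetric]
      by (rule stat_unique[OF finL nn s1 gb[OF A] T])
  qed
  obtain x y c where xyc: "x \<in> X" "y \<in> X" "c \<in> X" "x \<noteq> y" "x \<noteq> c" "y \<noteq> c"
    using three_elems[OF assms(1,2)] by blast
  obtain a b where ab: "a \<in> X" "b \<in> X" "(a, b) \<in> rh" "c \<noteq> a" "c \<noteq> b" "a \<noteq> b"
    using to xyc unfolding total_on_def by metis
  define A where "A = {a, b}"
  have A: "A \<subseteq> X" "A \<noteq> {}" using ab unfolding A_def by auto
  have nub: "\<nu> (craving X rh b) > 0" using monoD ab by blast
  have nuc: "\<nu> (craving X rh c) > 0"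
  proof -
    have "(a, c) \<in> rh \<or> (c, a) \<in> rh" using to ab xyc unfolding total_on_def by metis
    then show ?thesis using monoD ab xyc by (meson order.strict_trans)
  qed
  have ggX: "gg X r = 0" if r: "r \<in> L" for r
  proof (cases "r \<in> C")
    case True
    then obtain y where y: "y \<in> X" "r = craving X rh y" unfolding C_def by auto
    have "maxel r X = y" unfolding y(2)
    proof (rule maxel_eq[OF lin_props(1,2)[OF cravL[OF y(1), unfolded L_def]] y(1)])
      show "\<forall>z\<in>X - {y}. (y, z) \<in> craving X rh y" using y(1) by (auto intro: craving_top)
    qed
    then show ?thesis using True y invc phi0 unfolding gg_def by auto
  qed (simp add: gg_def)
  have SX: "S X = 1" unfolding S_def using ggX s1 by simp
  have pX: "p b X \<ge> \<nu> (craving X rh b)"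
  proof -
    have Xne: "X \<noteq> {}" using ab by auto
    have eq: "p b X = (\<Sum>r\<in>Nset X b X. stat_distr X t X r)" using cons ab Xne by blast
    have NL: "Nset X b X \<subseteq> L" unfolding Nset_def L_def by auto
    have mem: "craving X rh b \<in> Nset X b X"
      using cravL[OF ab(2)] ab unfolding Nset_def L_def by (auto intro: craving_top)
    have "stat_distr X t X (craving X rh b) \<le> (\<Sum>r\<in>Nset X b X. stat_distr X t X r)"
    proof (rule member_le_sum[OF mem])
      fix r assume "r \<in> Nset X b X - {craving X rh b}"
      then have "r \<in> L" using NL by auto
      then show "0 \<le> stat_distr X t X r" using SD[OF _ Xne] ggX SX nn by simp
    next
      show "finite (Nset X b X)" using NL finL finite_subset by blast
    qed
    moreover have "stat_distr X t X (craving X rh b) = \<nu> (craving X rh b)"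
      using SD[OF _ Xne] ggX SX cravL[OF ab(2)] by simp
    ultimately show ?thesis using eq by simp
  qed
  have ggAb: "gg A (craving X rh b) = 0"
  proof -
    have "maxel (craving X rh b) A = b"
    proof (rule maxel_eq[OF lin_props(1,2)[OF cravL[OF ab(2), unfolded L_def]]])
      show "b \<in> A" unfolding A_def by simp
      show "\<forall>z\<in>A - {b}. (b, z) \<in> craving X rh b" using ab unfolding A_def by (auto intro: craving_top)
    qed
    then show ?thesis using ab invc phi0 unfolding gg_def C_def by auto
  qed
  have ggAc: "gg A (craving X rh c) > 0"
  proof -
    have "(a, b) \<in> craving X rh c" using ab unfolding craving_def by auto
    then have "maxel (craving X rh c) A = a"
    proof (intro maxel_eq[OF lin_props(1,2)[OF cravL[OF xyc(3), unfolded L_def]]])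
      show "a \<in> A" unfolding A_def by simp
      assume "(a, b) \<in> craving X rh c"
      then show "\<forall>z\<in>A - {a}. (a, z) \<in> craving X rh c" unfolding A_def by auto
    qed
    then show ?thesis using ab xyc invc phiP unfolding gg_def C_def by auto
  qed
  have SA: "S A > 1"
  proof -
    have "sum \<nu> L < S A" unfolding S_def
    proof (rule sum_strict_mono_ex1[OF finL])
      show "\<forall>r\<in>L. \<nu> r \<le> \<nu> r / (1 - gg A r)"
      proof
        fix r assume r: "r \<in> L"
        have "0 < 1 - gg A r" "1 - gg A r \<le> 1" using gb[OF A] r by auto
        then show "\<nu> r \<le> \<nu> r / (1 - gg A r)" using nn r by (simp add: le_divide_eq mult_left_le)
      qed
      have "0 < 1 - gg A (craving X rh c)" "1 - gg A (craving X rh c) < 1"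
        using gb[OF A] cravL[OF xyc(3)] ggAc by auto
      then have "\<nu> (craving X rh c) < \<nu> (craving X rh c) / (1 - gg A (craving X rh c))"
        using nuc by (simp add: less_divide_eq)
      then show "\<exists>r\<in>L. \<nu> r < \<nu> r / (1 - gg A r)" using cravL[OF xyc(3)] by blast
    qed
    then show ?thesis using s1 by simp
  qed
  have pA: "p b A = \<nu> (craving X rh b) / S A"
  proof -
    have eq: "p b A = (\<Sum>r\<in>Nset X b A. stat_distr X t A r)" using cons A unfolding A_def by blast
    have NL: "Nset X b A \<subseteq> L" unfolding Nset_def L_def by auto
    have mem: "craving X rh b \<in> Nset X b A"
      using cravL[OF ab(2)] ab unfolding Nset_def L_def A_def by (auto intro: craving_top)
    have "(\<Sum>r\<in>Nset X b A. stat_distr X t A r) =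
          (\<Sum>r\<in>Nset X b A. if r = craving X rh b then stat_distr X t A r else 0)"
    proof (rule sum.cong)
      fix r assume r: "r \<in> Nset X b A"
      show "stat_distr X t A r = (if r = craving X rh b then stat_distr X t A r else 0)"
      proof (cases "r = craving X rh b")
        case False
        have rL: "r \<in> L" using r NL by auto
        have ba: "(b, a) \<in> r" using r ab unfolding Nset_def A_def by auto
        have "r \<notin> C"
        proof
          assume "r \<in> C"
          then obtain z where z: "z \<in> X" "r = craving X rh z" unfolding C_def by auto
          then have "z \<noteq> b" using False by auto
          then have "(b, a) \<in> rh" using ba z unfolding craving_def by auto
          then show False using ab tr ir by (meson irrefl_def transD)
        qed
        then have "\<nu> r = 0" using supp rL by auto
        then show ?thesis using SD[OF A] rL False by simp
      qed simp
    qed simp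
    also have "\<dots> = stat_distr X t A (craving X rh b)"
      using mem finite_subset[OF NL finL] by (simp add: sum.delta)
    also have "\<dots> = \<nu> (craving X rh b) / S A"
      using SD[OF A] cravL[OF ab(2)] ggAb by simp
    finally show ?thesis using eq by simp
  qed
  have "p b A < p b X"
  proof -
    have "\<nu> (craving X rh b) / S A < \<nu> (craving X rh b)"
      using SA nub by (simp add: divide_less_eq)
    then show ?thesis using pA pX by simp
  qed
  moreover have "b \<in> A" unfolding A_def by simp
  ultimately have "b \<in> A \<and> A \<subseteq> X \<and> X \<subseteq> X \<and> p b A < p b X" using A by simp
  then show ?thesis by (intro exI[of _ b] exI[of _ A] exI[of _ X])
qed

end
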